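(* Let $L$ be a friendly labeling function, $T$ a tree with root edge, and $e$ an interior edge of $T$. If $(l_1,m,n_1)$ and $(l_2,m,n_2)$ are consistent labelings of $T$ (same label $m$ on $e$), then $(l_1,m,n_2)$ and $(l_2,m,n_1)$ are consistent labelings of $T$ and the quadratic binomial $$q_{(l_1,m,n_1)}\,q_{(l_2,m,n_2)}-q_{(l_1,m,n_2)}\,q_{(l_2,m,n_1)}$$ lies in the toric ideal $I_{T,L}$.
   Context: Let $G$ be a finite abelian group written additively, $\mathcal{L}$ a finite set, $L:G\to\mathcal{L}$ a function. A tree with root edge is a finite tree $T$ with a distinguished leaf $\rho$; the edge at $\rho$ is the root edge. Every vertex $v\neq\rho$ has a unique parent edge (first edge on the path from $v$ to $\rho$); other edges at $v$ are child edges. Vertices that are neither $\rho$ nor leaves are interior vertices; an edge is interior if both endpoints are interior vertices. $E(T)$ is the edge set. An edge $e'$ is below $e$ if $e$ lies on the path from $\rho$ to $e'$ (so $e$ is below itself). A map $h:E(T)\to G$ is a consistent assignment if for every interior vertex $v$, $h(\text{parent edge of }v)=\sum h(\text{child edges of }v)$. ${\rm im}(L^T)=\{L\circ h: h\text{ consistent}\}$ is the set of consistent labelings. $I_{T,L}$ is the kernel of $\mathbb{C}[q_\lambda:\lambda\in{\rm im}(L^T)]\to\mathbb{C}[a^{(e)}_l:e\in E(T),l\in\mathcal{L}]$, $q_\lambda\mapsto\prod_{e\in E(T)}a^{(e)}_{\lambda(e)}$. For an edge $e$, $T_{e,-}$ is the tree formed by the edges below $e$ and $T_{e,+}$ the tree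 formed by $e$ and all edges not below $e$. A labeling of $T$ is written as a triple $(l,m,n)$, where $l$ is its restriction to the edges of $T_{e,-}$ other than $e$, $m$ its value on $e$, and $n$ its restriction to the edges of $T_{e,+}$ other than $e$. Friendliness: for $m\ge3$ let $Z_m=\{(g_1,\dots,g_m)\in G^m: g_1+\cdots+g_{m-1}=g_m\}$ and $\widetilde{L}(g_1,\dots,g_m)=(L(g_1),\dots,L(g_m))$; $L$ is $m$-friendly if for every $l\in\widetilde{L}(Z_m)$ and every $i$, the set of $i$-th coordinates of elements of $\widetilde{L}^{-1}(l)$ equals $L^{-1}(l_i)$; $L$ is friendly if it is $m$-friendly for all $m\ge3$. *)

theory Defs
  imports Complex_Main "HOL-Library.Poly_Mapping" "HOL-Library.FuncSet"
begin

definition adj :: "'v set set \<Rightarrow> 'v \<Rightarrow> 'v \<Rightarrow> bool" where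
  "adj E u w \<longleftrightarrow> {u, w} \<in> E"

definition is_path :: "'v set set \<Rightarrow> 'v list \<Rightarrow> bool" where
  "is_path E xs \<longleftrightarrow> xs \<noteq> [] \<and> distinct xs \<and>
     (\<forall>i. Suc i < length xs \<longrightarrow> {xs ! i, xs ! Suc i} \<in> E)"

definition path_edges :: "'v list \<Rightarrow> 'v set set" where
  "path_edges xs = {{xs ! i, xs ! Suc i} | i. Suc i < length xs}"

definition connected_graph :: "'v set \<Rightarrow> 'v set set \<Rightarrow> bool" where
  "connected_graph V E \<longleftrightarrow>
     (\<forall>u\<in>V. \<forall>w\<in>V. \<exists>xs. is_path E xs \<and> hd xs = u \<and> last xs = w)"

text \<open>A finite tree: a finite connected simple graph without cycles; acyclicity is
expressed as uniqueness of paths between any two vertices.\<close>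

definition finite_tree :: "'v set \<Rightarrow> 'v set set \<Rightarrow> bool" where
  "finite_tree V E \<longleftrightarrow> finite V \<and> V \<noteq> {} \<and>
     (\<forall>e\<in>E. \<exists>u w. u \<noteq> w \<and> u \<in> V \<and> w \<in> V \<and> e = {u, w}) \<and>
     connected_graph V E \<and>
     (\<forall>xs ys. is_path E xs \<longrightarrow> is_path E ys \<longrightarrow> hd xs = hd ys \<longrightarrow> last xs = last ys
        \<longrightarrow> xs = ys)"

definition degree :: "'v set set \<Rightarrow> 'v \<Rightarrow> nat" where
  "degree E v = card {e\<in>E. v \<in> e}"

definition is_leaf :: "'v set set \<Rightarrow> 'v \<Rightarrow> bool" where
  "is_leaf E v \<longleftrightarrow> degree E v = 1"

text \<open>A tree with root edge: a finite tree with a distinguished leaf \<rho>.\<close>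

definition rooted_tree :: "'v set \<Rightarrow> 'v set set \<Rightarrow> 'v \<Rightarrow> bool" where
  "rooted_tree V E \<rho> \<longleftrightarrow> finite_tree V E \<and> \<rho> \<in> V \<and> is_leaf E \<rho>"

definition parent_edge :: "'v set set \<Rightarrow> 'v \<Rightarrow> 'v \<Rightarrow> 'v set" where
  "parent_edge E \<rho> v = (THE e. \<exists>xs. is_path E xs \<and> hd xs = v \<and> last xs = \<rho> \<and>
      2 \<le> length xs \<and> e = {xs ! 0, xs ! 1})"

definition child_edges :: "'v set set \<Rightarrow> 'v \<Rightarrow> 'v \<Rightarrow> 'v set set" where
  "child_edges E \<rho> v = {e\<in>E. v \<in> e \<and> e \<noteq> parent_edge E \<rho> v}"

definition interior_vertex :: "'v set \<Rightarrow> 'v set set \<Rightarrow> 'v \<Rightarrow> 'v \<Rightarrow> bool" where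
  "interior_vertex V E \<rho> v \<longleftrightarrow> v \<in> V \<and> v \<noteq> \<rho> \<and> \<not> is_leaf E v"

definition interior_edge :: "'v set \<Rightarrow> 'v set set \<Rightarrow> 'v \<Rightarrow> 'v set \<Rightarrow> bool" where
  "interior_edge V E \<rho> e \<longleftrightarrow> e \<in> E \<and> (\<forall>v\<in>e. interior_vertex V E \<rho> v)"

text \<open>e' is below e iff e lies on the path from \<rho> to e' (the path from \<rho> whose last
edge is e'). In particular e is below itself.\<close>

definition below :: "'v set set \<Rightarrow> 'v \<Rightarrow> 'v set \<Rightarrow> 'v set \<Rightarrow> bool" where
  "below E \<rho> e e' \<longleftrightarrow> (\<exists>xs. is_path E xs \<and> hd xs = \<rho> \<and> 2 \<le> length xs \<and>
      {xs ! (length xs - 2), xs ! (length xs - 1)} = e' \<and> e \<in> path_edges xs)"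

definition consistent_assignment ::
  "'v set \<Rightarrow> 'v set set \<Rightarrow> 'v \<Rightarrow> ('v set \<Rightarrow> 'g::ab_group_add) \<Rightarrow> bool" where
  "consistent_assignment V E \<rho> h \<longleftrightarrow>
     (\<forall>v. interior_vertex V E \<rho> v \<longrightarrow>
        h (parent_edge E \<rho> v) = (\<Sum>e\<in>child_edges E \<rho> v. h e))"

text \<open>Labelings are functions on E (extensional, i.e. undefined outside E).\<close>

definition consistent_labelings ::
  "'v set \<Rightarrow> 'v set set \<Rightarrow> 'v \<Rightarrow> ('g::ab_group_add \<Rightarrow> 'l) \<Rightarrow> ('v set \<Rightarrow> 'l) set" where
  "consistent_labelings V E \<rho> L =
     {(\<lambda>e\<in>E. L (h e)) | h. consistent_assignment V E \<rho> h}"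

text \<open>Given labelings lam1 = (l1,m,n1), lam2 = (l2,m,n2) (with respect to edge e),
glue lam1 lam2 is (l1,m,n2): it agrees with lam1 on the edges of T_{e,-} (edges below e,
including e) and with lam2 on the remaining edges.\<close>

definition glue :: "'v set set \<Rightarrow> 'v \<Rightarrow> 'v set \<Rightarrow> ('v set \<Rightarrow> 'l) \<Rightarrow> ('v set \<Rightarrow> 'l)
    \<Rightarrow> ('v set \<Rightarrow> 'l)" where
  "glue E \<rho> e lam1 lam2 = (\<lambda>e'\<in>E. if below E \<rho> e e' then lam1 e' else lam2 e')"

definition Zm :: "nat \<Rightarrow> ('g::ab_group_add) list set" where
  "Zm m = {gs. length gs = m \<and> sum_list (take (m - 1) gs) = gs ! (m - 1)}"

definition m_friendly :: "nat \<Rightarrow> ('g::ab_group_add \<Rightarrow> 'l) \<Rightarrow> bool" where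
  "m_friendly m L \<longleftrightarrow>
     (\<forall>l \<in> map L ` Zm m. \<forall>i < m.
        {gs ! i | gs. gs \<in> Zm m \<and> map L gs = l} = L -` {l ! i})"

definition friendly :: "('g::ab_group_add \<Rightarrow> 'l) \<Rightarrow> bool" where
  "friendly L \<longleftrightarrow> (\<forall>m\<ge>3. m_friendly m L)"

text \<open>Multivariate polynomials over \<complex> are represented as finitely supported maps
from monomials (finitely supported exponent maps from variables to nat) to coefficients.\<close>

type_synonym 'x cpoly = "('x \<Rightarrow>\<^sub>0 nat) \<Rightarrow>\<^sub>0 complex"

definition Var :: "'x \<Rightarrow> 'x cpoly" where
  "Var x = Poly_Mapping.single (Poly_Mapping.single x 1) 1"

definition vars :: "'x cpoly \<Rightarrow> 'x set" where
  "vars p = (\<Union>m\<in>Poly_Mapping.keys p. Poly_Mapping.keys m)"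

text \<open>The C-algebra homomorphism sending each variable x to the polynomial f x.\<close>

definition subst_hom :: "('x \<Rightarrow> 'y cpoly) \<Rightarrow> 'x cpoly \<Rightarrow> 'y cpoly" where
  "subst_hom f p = (\<Sum>m\<in>Poly_Mapping.keys p. Poly_Mapping.single 0 (Poly_Mapping.lookup p m) *
                       (\<Prod>x\<in>Poly_Mapping.keys m. f x ^ Poly_Mapping.lookup m x))"

text \<open>q_\<lambda> \<mapsto> \<Prod>_{e\<in>E} a^{(e)}_{\<lambda>(e)}; the variable a^{(e)}_l is indexed by (e,l).\<close>

definition param_map :: "'v set set \<Rightarrow> ('v set \<Rightarrow> 'l) \<Rightarrow> ('v set \<times> 'l) cpoly" where
  "param_map E lam = (\<Prod>e\<in>E. Var (e, lam e))"

definition toric_ideal ::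
  "'v set \<Rightarrow> 'v set set \<Rightarrow> 'v \<Rightarrow> ('g::ab_group_add \<Rightarrow> 'l) \<Rightarrow> ('v set \<Rightarrow> 'l) cpoly set" where
  "toric_ideal V E \<rho> L =
     {p. vars p \<subseteq> consistent_labelings V E \<rho> L \<and> subst_hom (param_map E) p = 0}"

end

theory Submission imports Defs "HOL-Library.Sublist" begin

lemma Var_mult: "Var a * Var b = Poly_Mapping.single (Poly_Mapping.single a 1 + Poly_Mapping.single b 1) (1::complex)"
  by (simp add: Var_def mult_single)

lemma vars_single: "vars (Poly_Mapping.single m (c::complex)) \<subseteq> Poly_Mapping.keys m"
  by (simp add: vars_def)

lemma vars_diff: "vars (p - q) \<subseteq> vars p \<union> vars q"
proof -
  have "Poly_Mapping.keys (p - q) \<subseteq> Poly_Mapping.keys p \<union> Poly_Mapping.keys q"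
    by (auto simp: in_keys_iff lookup_minus)
  thus ?thesis unfolding vars_def by blast
qed

lemma vars_VV: "vars (Var a * Var b) \<subseteq> {a, b}"
proof -
  have "Poly_Mapping.keys (Poly_Mapping.single a (1::nat) + Poly_Mapping.single b 1) \<subseteq> {a,b}"
    using keys_add[of "Poly_Mapping.single a (1::nat)" "Poly_Mapping.single b 1"] by auto
  thus ?thesis unfolding Var_mult by (meson vars_single order_trans)
qed

lemma prod_two: "(\<Prod>x\<in>Poly_Mapping.keys (Poly_Mapping.single a 1 + Poly_Mapping.single b (1::nat)).
      f x ^ Poly_Mapping.lookup (Poly_Mapping.single a 1 + Poly_Mapping.single b 1) x) = (f a * f b :: 'y cpoly)"
proof (cases "a = b")
  case True
  have "Poly_Mapping.single a 1 + Poly_Mapping.single b (1::nat) = Poly_Mapping.single a (1 + 1)"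
    using True by (simp only: single_add)
  thus ?thesis using True by (simp add: power2_eq_square)
next
  case False
  have k: "Poly_Mapping.keys (Poly_Mapping.single a 1 + Poly_Mapping.single b (1::nat)) = {a,b}"
    using False unfolding set_eq_iff in_keys_iff lookup_add lookup_single by (simp add: when_def)
  show ?thesis unfolding k using False by (simp add: lookup_add lookup_single when_def)
qed

lemma subst_binom:
  "subst_hom f (Var a * Var b - Var c * Var d) = f a * f b - f c * f d"
proof -
  define m1 where "m1 = Poly_Mapping.single a 1 + Poly_Mapping.single b (1::nat)"
  define m2 where "m2 = Poly_Mapping.single c 1 + Poly_Mapping.single d (1::nat)"
  have p: "Var a * Var b - Var c * Var d = Poly_Mapping.single m1 1 - Poly_Mapping.single m2 (1::complex)"
    by (simp add: Var_mult m1_def m2_def)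
  have e1: "(\<Prod>x\<in>Poly_Mapping.keys m1. f x ^ Poly_Mapping.lookup m1 x) = f a * f b"
    unfolding m1_def by (rule prod_two)
  have e2: "(\<Prod>x\<in>Poly_Mapping.keys m2. f x ^ Poly_Mapping.lookup m2 x) = f c * f d"
    unfolding m2_def by (rule prod_two)
  show ?thesis
  proof (cases "m1 = m2")
    case True
    then have "Var a * Var b - Var c * Var d = 0" using p by simp
    then show ?thesis using e1 e2 True by (simp add: subst_hom_def)
  next
    case False
    define q where "q = Poly_Mapping.single m1 1 - Poly_Mapping.single m2 (1::complex)"
    have k: "Poly_Mapping.keys q = {m1, m2}"
      using False by (auto simp: q_def in_keys_iff lookup_minus lookup_single when_def split: if_splits)
    define F where "F m = (\<Prod>x\<in>Poly_Mapping.keys m. f x ^ Poly_Mapping.lookup m x)" for m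
    have l1: "Poly_Mapping.lookup q m1 = 1" using False by (simp add: q_def lookup_minus lookup_single)
    have l2: "Poly_Mapping.lookup q m2 = -1" using False by (simp add: q_def lookup_minus lookup_single)
    have "subst_hom f q = (\<Sum>m\<in>{m1, m2}. Poly_Mapping.single 0 (Poly_Mapping.lookup q m) * F m)"
      unfolding subst_hom_def F_def k ..
    also have "\<dots> = Poly_Mapping.single 0 (Poly_Mapping.lookup q m1) * F m1 + Poly_Mapping.single 0 (Poly_Mapping.lookup q m2) * F m2"
      using False by simp
    also have "\<dots> = F m1 - F m2" unfolding l1 l2 single_uminus single_one by simp
    also have "\<dots> = f a * f b - f c * f d" using e1 e2 unfolding F_def by simp
    finally show ?thesis using p unfolding q_def by simp
  qed
qed


lemma is_path_drop: "is_path E xs \<Longrightarrow> n < length xs \<Longrightarrow> is_path E (drop n xs)"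
  unfolding is_path_def by auto

lemma is_path_take: "is_path E xs \<Longrightarrow> 0 < n \<Longrightarrow> is_path E (take n xs)"
  unfolding is_path_def by auto

lemma is_path_rev: "is_path E xs \<Longrightarrow> is_path E (rev xs)"
  unfolding is_path_def
proof (intro conjI allI impI)
  fix i assume a: "xs \<noteq> [] \<and> distinct xs \<and> (\<forall>i. Suc i < length xs \<longrightarrow> {xs ! i, xs ! Suc i} \<in> E)"
    and i: "Suc i < length (rev xs)"
  define j where "j = length xs - Suc (Suc i)"
  have "Suc j < length xs" using i unfolding j_def by auto
  hence "{xs ! j, xs ! Suc j} \<in> E" using a by blast
  moreover have "rev xs ! i = xs ! Suc j" "rev xs ! Suc i = xs ! j"
  proof -
    have l: "length xs - Suc i = Suc j" "length xs - Suc (Suc i) = j" using i unfolding j_def by simp_all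
    show "rev xs ! i = xs ! Suc j" using i l(1) rev_nth[of i xs] by simp
    show "rev xs ! Suc i = xs ! j" using i l(2) rev_nth[of "Suc i" xs] by simp
  qed
  ultimately show "{rev xs ! i, rev xs ! Suc i} \<in> E" by (simp add: insert_commute)
qed auto

lemma is_path_Cons: "is_path E xs \<Longrightarrow> {x, hd xs} \<in> E \<Longrightarrow> x \<notin> set xs \<Longrightarrow> is_path E (x # xs)"
  unfolding is_path_def
proof (intro conjI allI impI)
  fix i assume a: "xs \<noteq> [] \<and> distinct xs \<and> (\<forall>i. Suc i < length xs \<longrightarrow> {xs ! i, xs ! Suc i} \<in> E)"
    and h: "{x, hd xs} \<in> E" and i: "Suc i < length (x # xs)"
  show "{(x # xs) ! i, (x # xs) ! Suc i} \<in> E"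
  proof (cases i)
    case 0 thus ?thesis using h a by (simp add: hd_conv_nth)
  next
    case (Suc k) thus ?thesis using a i by auto
  qed
qed auto
lemma path_edges_iff: "e \<in> path_edges xs \<longleftrightarrow> (\<exists>i. Suc i < length xs \<and> e = {xs ! i, xs ! Suc i})"
  unfolding path_edges_def by blast

lemma path_edges_rev_sub: "path_edges (rev xs) \<subseteq> path_edges xs"
proof
  fix e assume "e \<in> path_edges (rev xs)"
  then obtain i where i: "Suc i < length xs" and e: "e = {rev xs ! i, rev xs ! Suc i}"
    unfolding path_edges_iff by auto
  define j where "j = length xs - Suc (Suc i)"
  have sj: "Suc j < length xs" using i unfolding j_def by simp
  have l: "length xs - Suc i = Suc j" "length xs - Suc (Suc i) = j" using i unfolding j_def by simp_all
  have "rev xs ! i = xs ! Suc j" using i l(1) rev_nth[of i xs] by simp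
  moreover have "rev xs ! Suc i = xs ! j" using i l(2) rev_nth[of "Suc i" xs] by simp
  ultimately have "e = {xs ! j, xs ! Suc j}" using e by (simp add: insert_commute)
  thus "e \<in> path_edges xs" unfolding path_edges_iff using sj by blast
qed

lemma path_edges_rev: "path_edges (rev xs) = path_edges xs"
  using path_edges_rev_sub[of xs] path_edges_rev_sub[of "rev xs"] by simp

lemma path_edges_Cons: "path_edges (x # y # ys) = insert {x, y} (path_edges (y # ys))"
proof (rule set_eqI)
  fix e
  show "e \<in> path_edges (x # y # ys) \<longleftrightarrow> e \<in> insert {x, y} (path_edges (y # ys))"
  proof
    assume "e \<in> path_edges (x # y # ys)"
    then obtain i where i: "Suc i < length (x # y # ys)" and e: "e = {(x # y # ys) ! i, (x # y # ys) ! Suc i}"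
      unfolding path_edges_iff by blast
    show "e \<in> insert {x, y} (path_edges (y # ys))"
    proof (cases i)
      case 0 thus ?thesis using e by simp
    next
      case (Suc k)
      hence "Suc k < length (y # ys)" "e = {(y # ys) ! k, (y # ys) ! Suc k}" using i e by simp_all
      hence "e \<in> path_edges (y # ys)" unfolding path_edges_iff by blast
      thus ?thesis by simp
    qed
  next
    assume "e \<in> insert {x, y} (path_edges (y # ys))"
    then consider "e = {x, y}" | k where "Suc k < length (y # ys)" "e = {(y # ys) ! k, (y # ys) ! Suc k}"
      using path_edges_iff[of e "y # ys"] by blast
    thus "e \<in> path_edges (x # y # ys)"
    proof cases
      case 1
      have "e = {(x # y # ys) ! 0, (x # y # ys) ! Suc 0}" using 1 by simp
      moreover have "Suc 0 < length (x # y # ys)" by simp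
      ultimately show ?thesis unfolding path_edges_iff by blast
    next
      case 2
      hence "Suc (Suc k) < length (x # y # ys)" "e = {(x # y # ys) ! Suc k, (x # y # ys) ! Suc (Suc k)}" by simp_all
      thus ?thesis unfolding path_edges_iff by blast
    qed
  qed
qed

lemma path_edges_append: "ys \<noteq> [] \<Longrightarrow> path_edges ys \<subseteq> path_edges (zs @ ys)"
proof (induction zs)
  case Nil thus ?case by simp
next
  case (Cons z zs)
  obtain w ws where w: "zs @ ys = w # ws" using Cons.prems by (cases "zs @ ys") auto
  have "path_edges (z # w # ws) = insert {z, w} (path_edges (w # ws))" by (rule path_edges_Cons)
  moreover have "path_edges ys \<subseteq> path_edges (w # ws)" using Cons w by simp
  ultimately show ?case using w by auto
qed


locale rtree =
  fixes V :: "'v set" and E :: "'v set set" and r :: 'v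
  assumes rt: "rooted_tree V E r"
begin

abbreviation pe where "pe \<equiv> parent_edge E r"

lemma finV: "finite V"
  using rt unfolding rooted_tree_def finite_tree_def by blast

lemma edgesV: "e \<in> E \<Longrightarrow> \<exists>u w. u \<noteq> w \<and> u \<in> V \<and> w \<in> V \<and> e = {u, w}"
  using rt unfolding rooted_tree_def finite_tree_def by blast

lemma conn: "u \<in> V \<Longrightarrow> w \<in> V \<Longrightarrow> \<exists>xs. is_path E xs \<and> hd xs = u \<and> last xs = w"
  using rt unfolding rooted_tree_def finite_tree_def connected_graph_def by blast

lemma uniq: "is_path E xs \<Longrightarrow> is_path E ys \<Longrightarrow> hd xs = hd ys \<Longrightarrow> last xs = last ys \<Longrightarrow> xs = ys"
  using rt unfolding rooted_tree_def finite_tree_def by blast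

lemma rV: "r \<in> V"
  using rt unfolding rooted_tree_def by blast

lemma finE: "finite E"
proof -
  have "E \<subseteq> Pow V" using edgesV by blast
  thus ?thesis using finV by (meson finite_Pow_iff finite_subset)
qed

lemma edge_in_V: "{x, y} \<in> E \<Longrightarrow> x \<in> V"
  using edgesV by (metis doubleton_eq_iff)

lemma path_in_V:
  assumes "is_path E xs" "x \<in> set xs" "2 \<le> length xs"
  shows "x \<in> V"
proof -
  obtain i where i: "i < length xs" "x = xs ! i" using assms(2) by (metis in_set_conv_nth)
  show ?thesis
  proof (cases "Suc i < length xs")
    case True
    hence "{xs ! i, xs ! Suc i} \<in> E" using assms(1) unfolding is_path_def by blast
    thus ?thesis using i edge_in_V by blast
  next
    case False
    define j where "j = i - 1"
    have j: "Suc j < length xs" "Suc j = i" using False i assms(3) unfolding j_def by auto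
    hence "{xs ! j, xs ! Suc j} \<in> E" using assms(1) unfolding is_path_def by blast
    hence "{xs ! Suc j, xs ! j} \<in> E" by (simp add: insert_commute)
    thus ?thesis using i j edge_in_V by metis
  qed
qed

definition P where "P v = (THE xs. is_path E xs \<and> hd xs = v \<and> last xs = r)"

lemma P_eq: "is_path E xs \<Longrightarrow> hd xs = v \<Longrightarrow> last xs = r \<Longrightarrow> P v = xs"
  unfolding P_def by (rule the_equality) (auto intro: uniq)

lemma P: "v \<in> V \<Longrightarrow> is_path E (P v) \<and> hd (P v) = v \<and> last (P v) = r"
proof -
  assume "v \<in> V"
  then obtain xs where "is_path E xs" "hd xs = v" "last xs = r" using conn rV by blast
  thus ?thesis using P_eq by metis
qed

lemma P_ne: "v \<in> V \<Longrightarrow> P v \<noteq> []"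
  using P unfolding is_path_def by blast

lemma P_distinct: "v \<in> V \<Longrightarrow> distinct (P v)"
  using P unfolding is_path_def by blast

lemma P_len: "v \<in> V \<Longrightarrow> v \<noteq> r \<Longrightarrow> 2 \<le> length (P v)"
proof -
  assume a: "v \<in> V" "v \<noteq> r"
  have "length (P v) \<noteq> 0" using P_ne a by simp
  moreover have "length (P v) \<noteq> 1"
  proof
    assume "length (P v) = 1"
    then obtain x where "P v = [x]" by (metis One_nat_def length_0_conv length_Suc_conv)
    hence "hd (P v) = last (P v)" by simp
    thus False using P[OF a(1)] a(2) by simp
  qed
  ultimately show ?thesis by linarith
qed

lemma P0: "v \<in> V \<Longrightarrow> P v ! 0 = v"
  using P P_ne by (metis hd_conv_nth)

lemma r_in_P: "v \<in> V \<Longrightarrow> r \<in> set (P v)"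
  using P P_ne by (metis last_in_set)

lemma pe: "v \<in> V \<Longrightarrow> v \<noteq> r \<Longrightarrow> pe v = {v, P v ! 1}"
proof -
  assume a: "v \<in> V" "v \<noteq> r"
  have ex: "\<exists>xs. is_path E xs \<and> hd xs = v \<and> last xs = r \<and> 2 \<le> length xs \<and> {v, P v ! 1} = {xs ! 0, xs ! 1}"
    using P[OF a(1)] P_len[OF a] P0[OF a(1)] by metis
  show ?thesis unfolding parent_edge_def
  proof (rule the_equality)
    show "\<exists>xs. is_path E xs \<and> hd xs = v \<and> last xs = r \<and> 2 \<le> length xs \<and> {v, P v ! 1} = {xs ! 0, xs ! 1}"
      by (rule ex)
  next
    fix e assume "\<exists>xs. is_path E xs \<and> hd xs = v \<and> last xs = r \<and> 2 \<le> length xs \<and> e = {xs ! 0, xs ! 1}"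
    then obtain xs where xs: "is_path E xs" "hd xs = v" "last xs = r" "e = {xs ! 0, xs ! 1}" by blast
    have "P v = xs" using P_eq xs by blast
    thus "e = {v, P v ! 1}" using xs P0[OF a(1)] by simp
  qed
qed

lemma pe_E: "v \<in> V \<Longrightarrow> v \<noteq> r \<Longrightarrow> {v, P v ! 1} \<in> E"
proof -
  assume a: "v \<in> V" "v \<noteq> r"
  have "Suc 0 < length (P v)" using P_len[OF a] by simp
  hence "{P v ! 0, P v ! Suc 0} \<in> E" using P[OF a(1)] unfolding is_path_def by blast
  thus ?thesis using P0[OF a(1)] by simp
qed

lemma P1_ne: "v \<in> V \<Longrightarrow> v \<noteq> r \<Longrightarrow> P v ! 1 \<noteq> v"
proof -
  assume a: "v \<in> V" "v \<noteq> r"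
  have "1 < length (P v)" using P_len[OF a] by simp
  hence "P v ! 1 \<noteq> P v ! 0" using P_distinct[OF a(1)] P_ne[OF a(1)] nth_eq_iff_index_eq[of "P v" 1 0] by auto
  thus ?thesis using P0[OF a(1)] by simp
qed

lemma P_set_V: "v \<in> V \<Longrightarrow> v \<noteq> r \<Longrightarrow> set (P v) \<subseteq> V"
  using path_in_V P P_len by blast

lemma P_suffix:
  assumes "v \<in> V" "suffix s (P v)" "s \<noteq> []"
  shows "P (hd s) = s"
proof -
  obtain zs where pv: "P v = zs @ s" using assms(2) unfolding suffix_def by blast
  define k where "k = length zs"
  have d: "drop k (P v) = s" by (simp add: pv k_def)
  have "k < length (P v)" using assms(3) pv k_def by simp
  hence "is_path E s" using is_path_drop P[OF assms(1)] d by metis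
  moreover have "last s = r" using P[OF assms(1)] pv assms(3) by (metis last_appendR)
  ultimately show ?thesis using P_eq by blast
qed

lemma P_len_le: "v \<in> V \<Longrightarrow> v \<noteq> r \<Longrightarrow> length (P v) \<le> card V"
  using P_set_V P_distinct finV by (metis card_mono distinct_card)

lemma P_tl: "v \<in> V \<Longrightarrow> v \<noteq> r \<Longrightarrow> P (P v ! 1) = tl (P v)"
proof -
  assume a: "v \<in> V" "v \<noteq> r"
  have "1 \<le> length (tl (P v))" using P_len[OF a] by simp
  have ne: "tl (P v) \<noteq> []"
  proof
    assume "tl (P v) = []"
    hence "length (tl (P v)) = 0" by simp
    thus False using \<open>1 \<le> length (tl (P v))\<close> by linarith
  qed
  have "hd (tl (P v)) = P v ! 1" using ne by (cases "P v") (auto simp: hd_conv_nth)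
  thus ?thesis using P_suffix[OF a(1) suffix_tl ne] by simp
qed

lemma P_Cons: "v \<in> V \<Longrightarrow> v \<noteq> r \<Longrightarrow> P v = v # P (P v ! 1)"
  using P_tl P_ne P0 by (metis hd_Cons_tl hd_conv_nth)

end

context rtree begin

lemma not_r_of_Cons: "P u = u # P v \<Longrightarrow> v \<in> V \<Longrightarrow> u \<noteq> r"
proof
  assume a: "P u = u # P v" "v \<in> V" "u = r"
  have "u \<in> V" using a rV by simp
  hence "distinct (P u)" by (rule P_distinct)
  thus False using a r_in_P[OF a(2)] by simp
qed

lemma child_char1:
  assumes v: "v \<in> V" "v \<noteq> r" and c: "c \<in> child_edges E r v"
  shows "\<exists>u. u \<in> V \<and> u \<noteq> r \<and> P u = u # P v \<and> c = {u, v}"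
proof -
  have cE: "c \<in> E" and vc: "v \<in> c" and cpe: "c \<noteq> pe v" using c unfolding child_edges_def by auto
  obtain x y where xy: "x \<noteq> y" "x \<in> V" "y \<in> V" "c = {x, y}" using edgesV[OF cE] by blast
  obtain u where u: "u \<noteq> v" "u \<in> V" "c = {v, u}" using xy vc by (metis insert_commute insertE singletonD)
  have uv: "{u, v} \<in> E" using u cE by (simp add: insert_commute)
  have nin: "u \<notin> set (P v)"
  proof
    assume "u \<in> set (P v)"
    then obtain j where j: "j < length (P v)" "P v ! j = u" by (metis in_set_conv_nth)
    have j0: "j \<noteq> 0"
    proof
      assume "j = 0" thus False using j P0[OF v(1)] u(1) by simp
    qed
    have j1: "j \<noteq> 1" using j u(3) cpe pe[OF v] by auto
    have pt: "is_path E (take (Suc j) (P v))" using is_path_take P[OF v(1)] by blast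
    have ht: "hd (take (Suc j) (P v)) = v" using P[OF v(1)] P_ne[OF v(1)] by simp
    have lt: "last (take (Suc j) (P v)) = u" using j by (simp add: take_Suc_conv_app_nth)
    have p2: "is_path E [v, u]" unfolding is_path_def using uv u(1)
      by (auto simp: insert_commute less_Suc_eq)
    have "take (Suc j) (P v) = [v, u]" using uniq[OF pt p2] ht lt by simp
    hence "length (take (Suc j) (P v)) = 2" by simp
    thus False using j j1 by simp
  qed
  have "is_path E (u # P v)"
    using is_path_Cons[of E "P v" u] P[OF v(1)] uv nin by simp
  hence Pu: "P u = u # P v" using P_eq P[OF v(1)] P_ne[OF v(1)] by simp
  show ?thesis using Pu u not_r_of_Cons[OF Pu v(1)] by (auto simp: insert_commute)
qed

lemma pe_child: "u \<in> V \<Longrightarrow> v \<in> V \<Longrightarrow> P u = u # P v \<Longrightarrow> pe u = {u, v}"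
proof -
  assume a: "u \<in> V" "v \<in> V" "P u = u # P v"
  have "u \<noteq> r" using not_r_of_Cons a by blast
  hence "pe u = {u, P u ! 1}" using pe a by blast
  thus ?thesis using a P0[OF a(2)] P_ne[OF a(2)] by (simp add: hd_conv_nth)
qed

lemma child_char2:
  assumes v: "v \<in> V" "v \<noteq> r" and u: "u \<in> V" "P u = u # P v"
  shows "pe u \<in> child_edges E r v"
proof -
  have ur: "u \<noteq> r" using not_r_of_Cons u v by blast
  have peu: "pe u = {u, v}" using pe_child u v by blast
  have "pe u \<in> E" using pe_E[OF u(1) ur] pe[OF u(1) ur] by simp
  moreover have "v \<in> pe u" using peu by simp
  moreover have "pe u \<noteq> pe v"
  proof
    assume "pe u = pe v"
    hence eq: "{u, v} = {v, P v ! 1}" using peu pe[OF v] by simp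
    have "v \<in> set (P v)" using P0[OF v(1)] P_ne[OF v(1)] by (metis nth_mem length_greater_0_conv)
    hence "u \<noteq> v" using P_distinct[OF u(1)] u(2) by auto
    hence "u = P v ! 1" using eq by (metis doubleton_eq_iff)
    moreover have "1 < length (P v)" using P_len[OF v] by simp
    ultimately have "u \<in> set (P v)" by simp
    thus False using P_distinct[OF u(1)] u(2) by simp
  qed
  ultimately show ?thesis unfolding child_edges_def by blast
qed

lemma pe_inj:
  assumes u: "u \<in> V" "u \<noteq> r" and w: "w \<in> V" "w \<noteq> r" and eq: "pe u = pe w"
  shows "u = w"
proof (rule ccontr)
  assume ne: "u \<noteq> w"
  have eq2: "{u, P u ! 1} = {w, P w ! 1}" using eq pe[OF u] pe[OF w] by simp
  have uw: "w = P u ! 1" using eq2 ne by (metis doubleton_eq_iff)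
  have wu: "u = P w ! 1" using eq2 ne by (metis doubleton_eq_iff)
  have "P w = tl (P u)" using P_tl[OF u] uw by simp
  hence "P w ! 1 = P u ! 2" using P_len[OF w] by (cases "P u") (auto simp: nth_tl)
  hence "P u ! 2 = P u ! 0" using wu P0[OF u(1)] by simp
  moreover have "2 < length (P u)" using P_len[OF w] \<open>P w = tl (P u)\<close> by simp
  ultimately show False using P_distinct[OF u(1)] P_ne[OF u(1)] nth_eq_iff_index_eq[of "P u" 2 0] by simp
qed

lemma pe_in_P: "w \<in> V \<Longrightarrow> w \<noteq> r \<Longrightarrow> pe w \<in> path_edges (P w)"
proof -
  assume w: "w \<in> V" "w \<noteq> r"
  have "Suc 0 < length (P w)" using P_len[OF w] by simp
  hence "{P w ! 0, P w ! Suc 0} \<in> path_edges (P w)" unfolding path_edges_iff by blast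
  thus ?thesis using pe[OF w] P0[OF w(1)] by simp
qed

lemma below_iff:
  assumes w: "w \<in> V" "w \<noteq> r"
  shows "below E r (pe w) e' \<longleftrightarrow> (\<exists>u. u \<in> V \<and> u \<noteq> r \<and> e' = pe u \<and> suffix (P w) (P u))"
proof
  assume "\<exists>u. u \<in> V \<and> u \<noteq> r \<and> e' = pe u \<and> suffix (P w) (P u)"
  then obtain u where u: "u \<in> V" "u \<noteq> r" "e' = pe u" "suffix (P w) (P u)" by blast
  define xs where "xs = rev (P u)"
  have xp: "is_path E xs" unfolding xs_def using is_path_rev P[OF u(1)] by blast
  have xh: "hd xs = r" unfolding xs_def using P[OF u(1)] P_ne[OF u(1)] by (simp add: hd_rev)
  have xl: "2 \<le> length xs" unfolding xs_def using P_len[OF u(1,2)] by simp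
  have "xs ! (length xs - 1) = P u ! 0" unfolding xs_def using P_ne[OF u(1)]
    by (simp add: rev_nth)
  moreover have "xs ! (length xs - 2) = P u ! 1" unfolding xs_def using xl[unfolded xs_def]
    by (simp add: rev_nth numeral_2_eq_2 Suc_diff_Suc)
  ultimately have "{xs ! (length xs - 2), xs ! (length xs - 1)} = e'"
    using u(3) pe[OF u(1,2)] P0[OF u(1)] by (simp add: insert_commute)
  moreover have "pe w \<in> path_edges xs"
  proof -
    obtain zs where "P u = zs @ P w" using u(4) unfolding suffix_def by blast
    hence "path_edges (P w) \<subseteq> path_edges (P u)" using path_edges_append P_ne[OF w(1)] by metis
    thus ?thesis unfolding xs_def path_edges_rev using pe_in_P[OF w] by blast
  qed
  ultimately show "below E r (pe w) e'" unfolding below_def using xp xh xl by blast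
next
  assume "below E r (pe w) e'"
  then obtain xs where xp: "is_path E xs" and xh: "hd xs = r" and xl: "2 \<le> length xs"
    and xe: "{xs ! (length xs - 2), xs ! (length xs - 1)} = e'" and pw: "pe w \<in> path_edges xs"
    unfolding below_def by blast
  define u where "u = last xs"
  define ys where "ys = rev xs"
  have yp: "is_path E ys" unfolding ys_def using is_path_rev xp by blast
  have xne: "xs \<noteq> []" using xl by auto
  have yh: "hd ys = u" unfolding ys_def u_def using xne by (simp add: hd_rev)
  have yl: "last ys = r" unfolding ys_def using xne xh by (simp add: last_rev)
  have uV: "u \<in> V" using path_in_V[OF xp _ xl] xne unfolding u_def by simp
  have Pu: "P u = ys" using P_eq yp yh yl by blast
  have ur: "u \<noteq> r"
  proof
    assume "u = r"
    hence "xs ! 0 = xs ! (length xs - 1)" using xh xne u_def by (simp add: hd_conv_nth last_conv_nth)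
    moreover have "distinct xs" using xp unfolding is_path_def by blast
    ultimately show False using xl xne nth_eq_iff_index_eq[of xs 0 "length xs - 1"] by simp
  qed
  have "xs ! (length xs - 1) = ys ! 0" unfolding ys_def using xne by (simp add: rev_nth)
  moreover have "xs ! (length xs - 2) = ys ! 1" unfolding ys_def using xl
    by (simp add: rev_nth numeral_2_eq_2 Suc_diff_Suc)
  ultimately have e'eq: "e' = pe u" using xe pe[OF uV ur] Pu P0[OF uV] by (simp add: insert_commute)
  have "pe w \<in> path_edges ys" using pw unfolding ys_def path_edges_rev .
  then obtain i where i: "Suc i < length ys" and pwi: "pe w = {ys ! i, ys ! Suc i}"
    unfolding path_edges_iff by blast
  have dys: "distinct ys" using yp unfolding is_path_def by blast
  have pw2: "{w, P w ! 1} = {ys ! i, ys ! Suc i}" using pwi pe[OF w] by simp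
  have "suffix (P w) (P u)"
  proof (cases "ys ! i = w")
    case True
    have "suffix (drop i ys) (P u)" using Pu suffix_drop by metis
    moreover have ne: "drop i ys \<noteq> []" using i by simp
    moreover have "hd (drop i ys) = w" using True i by (simp add: hd_drop_conv_nth)
    ultimately show ?thesis using P_suffix[OF uV] by metis
  next
    case False
    hence a1: "ys ! Suc i = w" "ys ! i = P w ! 1" using pw2 by (metis doubleton_eq_iff)+
    have s: "suffix (drop (Suc i) ys) (P u)" using Pu suffix_drop by metis
    have ne: "drop (Suc i) ys \<noteq> []" using i by simp
    have "hd (drop (Suc i) ys) = w" using a1 i by (simp add: hd_drop_conv_nth)
    hence Pw: "P w = drop (Suc i) ys" using P_suffix[OF uV s ne] by simp
    hence l2: "Suc (Suc i) < length ys" using P_len[OF w] by simp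
    have "P w ! 1 = ys ! Suc (Suc i)" using Pw l2 by simp
    hence "ys ! i = ys ! Suc (Suc i)" using a1 by simp
    thus ?thesis using dys l2 nth_eq_iff_index_eq[of ys i "Suc (Suc i)"] by simp
  qed
  thus "\<exists>u. u \<in> V \<and> u \<noteq> r \<and> e' = pe u \<and> suffix (P w) (P u)" using uV ur e'eq by blast
qed

end

lemma friendly_star:
  fixes L :: "'g::ab_group_add \<Rightarrow> 'l" and x :: "'c \<Rightarrow> 'g"
  assumes fr: "friendly L" and fin: "finite C" and ne: "C \<noteq> {}" and Lg: "L g = L (\<Sum>c\<in>C. x c)"
  shows "\<exists>y. (\<forall>c\<in>C. L (y c) = L (x c)) \<and> (\<Sum>c\<in>C. y c) = g"
proof (cases "card C = 1")
  case True
  then obtain c0 where C: "C = {c0}" by (metis card_1_singletonE)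
  show ?thesis using Lg C by (intro exI[of _ "\<lambda>_. g"]) simp
next
  case False
  obtain cs where cs: "distinct cs" "set cs = C" using finite_distinct_list[OF fin] by blast
  define k where "k = length cs"
  have kC: "k = card C" unfolding k_def using cs distinct_card[of cs] by simp
  have "k \<noteq> 0" using ne fin kC by simp
  moreover have "k \<noteq> 1" using False kC by simp
  ultimately have k2: "2 \<le> k" by linarith
  define gs where "gs = map x cs @ [sum x C]"
  have lgs: "length gs = Suc k" unfolding gs_def k_def by simp
  have tk: "take k gs = map x cs" unfolding gs_def k_def by simp
  have sl: "sum_list (map x cs) = sum x C" using cs sum_list_distinct_conv_sum_set[of cs x] by simp
  have gk: "gs ! k = sum x C" unfolding gs_def k_def by (simp add: nth_append)
  have gsZ: "gs \<in> Zm (Suc k)" unfolding Zm_def using lgs tk sl gk by simp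
  have mf: "m_friendly (Suc k) L" using fr k2 unfolding friendly_def by simp
  have mem: "map L gs \<in> map L ` Zm (Suc k)" using gsZ by blast
  have "\<forall>i<Suc k. {gs' ! i | gs'. gs' \<in> Zm (Suc k) \<and> map L gs' = map L gs} = L -` {map L gs ! i}"
    using bspec[OF mf[unfolded m_friendly_def] mem] by simp
  hence eqset: "{gs' ! k | gs'. gs' \<in> Zm (Suc k) \<and> map L gs' = map L gs} = L -` {map L gs ! k}"
    by simp
  have "g \<in> L -` {map L gs ! k}" using Lg gk lgs by simp
  hence "g \<in> {gs' ! k | gs'. gs' \<in> Zm (Suc k) \<and> map L gs' = map L gs}" by (subst eqset)
  then obtain gs' where gs': "gs' \<in> Zm (Suc k)" "map L gs' = map L gs" "gs' ! k = g"
    by auto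
  have lgs': "length gs' = Suc k" using gs' unfolding Zm_def by simp
  have sg: "sum_list (take k gs') = g" using gs' unfolding Zm_def by simp
  define idx where "idx c = (THE i. i < k \<and> cs ! i = c)" for c
  have idx: "idx (cs ! i) = i" if "i < k" for i
    unfolding idx_def
  proof (rule the_equality)
    show "i < k \<and> cs ! i = cs ! i" using that by simp
  next
    fix j assume "j < k \<and> cs ! j = cs ! i"
    thus "j = i" using that cs(1) nth_eq_iff_index_eq unfolding k_def by metis
  qed
  define y where "y c = gs' ! idx c" for c
  have bij: "bij_betw ((!) cs) {..<k} C" unfolding k_def using cs bij_betw_nth by blast
  have "(\<Sum>c\<in>C. y c) = (\<Sum>i<k. y (cs ! i))"
    using sum.reindex_bij_betw[OF bij, of y] by simp
  also have "\<dots> = (\<Sum>i<k. gs' ! i)" unfolding y_def using idx by simp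
  also have "\<dots> = (\<Sum>i<k. take k gs' ! i)" by simp
  also have "\<dots> = sum_list (take k gs')"
    using lgs' by (simp add: sum_list_sum_nth atLeast0LessThan)
  finally have s: "(\<Sum>c\<in>C. y c) = g" using sg by simp
  have "\<forall>c\<in>C. L (y c) = L (x c)"
  proof
    fix c assume "c \<in> C"
    then obtain i where i: "i < k" "c = cs ! i" using cs unfolding k_def by (metis in_set_conv_nth)
    have "L (y c) = L (gs' ! i)" unfolding y_def using idx i by simp
    also have "\<dots> = map L gs' ! i" using i lgs' by simp
    also have "\<dots> = map L gs ! i" using gs' by simp
    also have "\<dots> = L (x c)" using i lgs unfolding gs_def k_def by (simp add: nth_append)
    finally show "L (y c) = L (x c)" .
  qed
  thus ?thesis using s by blast
qed

context rtree begin

lemma strict_below: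
  assumes u: "u \<in> V" "u \<noteq> r" and w: "w \<in> V" and s: "suffix (P w) (P u)" and ne: "u \<noteq> w"
  shows "\<exists>x. x \<in> V \<and> P x = x # P w \<and> suffix (P x) (P u)"
proof -
  obtain zs where zs: "P u = zs @ P w" using s unfolding suffix_def by blast
  have "zs \<noteq> []"
  proof
    assume "zs = []"
    hence "P u = P w" using zs by simp
    hence "P u ! 0 = P w ! 0" by simp
    thus False using P0 u w ne by simp
  qed
  then obtain ys x where ys: "zs = ys @ [x]" by (metis rev_exhaust)
  have sx: "suffix (x # P w) (P u)" using zs ys unfolding suffix_def by auto
  have Px: "P x = x # P w" using P_suffix[OF u(1) sx] by simp
  have "x \<in> set (P u)" using zs ys by simp
  hence "x \<in> V" using P_set_V[OF u] by blast
  thus ?thesis using Px sx by auto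
qed

lemma suffix_eq_len: "suffix xs zs \<Longrightarrow> suffix ys zs \<Longrightarrow> length xs = length ys \<Longrightarrow> xs = ys"
  unfolding suffix_def by (metis append_eq_append_conv)

lemma child_pe:
  assumes v: "v \<in> V" "v \<noteq> r" and c: "c \<in> child_edges E r v"
  shows "\<exists>u. u \<in> V \<and> u \<noteq> r \<and> P u = u # P v \<and> c = pe u"
proof -
  obtain u where u: "u \<in> V" "u \<noteq> r" "P u = u # P v" "c = {u, v}" using child_char1[OF v c] by blast
  have "pe u = {u, v}" using pe_child u(1,3) v(1) by blast
  thus ?thesis using u by auto
qed

lemma degree_ge2:
  assumes w: "w \<in> V" "w \<noteq> r" and c: "c \<in> child_edges E r w"
  shows "\<not> is_leaf E w"
proof
  assume leaf: "is_leaf E w"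
  have "pe w \<in> {e\<in>E. w \<in> e}" using pe_E[OF w] pe[OF w] by simp
  moreover have "c \<in> {e\<in>E. w \<in> e}" and "c \<noteq> pe w" using c unfolding child_edges_def by auto
  ultimately have "{pe w, c} \<subseteq> {e\<in>E. w \<in> e}" "card {pe w, c} = 2" by auto
  hence "2 \<le> card {e\<in>E. w \<in> e}" using finE by (metis (no_types, lifting) card_mono finite_subset mem_Collect_eq subsetI)
  thus False using leaf unfolding is_leaf_def degree_def by simp
qed

lemma down:
  fixes L :: "'g::ab_group_add \<Rightarrow> 'l" and h :: "'v set \<Rightarrow> 'g"
  assumes fr: "friendly L"
  shows "w \<in> V \<Longrightarrow> w \<noteq> r \<Longrightarrow>
    (\<forall>v. interior_vertex V E r v \<and> suffix (P w) (P v) \<longrightarrow> h (pe v) = (\<Sum>c\<in>child_edges E r v. h c)) \<Longrightarrow>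
    L g = L (h (pe w)) \<Longrightarrow>
    \<exists>h'. h' (pe w) = g \<and> (\<forall>u. u \<in> V \<and> u \<noteq> r \<and> suffix (P w) (P u) \<longrightarrow> L (h' (pe u)) = L (h (pe u)))
      \<and> (\<forall>v. interior_vertex V E r v \<and> suffix (P w) (P v) \<longrightarrow> h' (pe v) = (\<Sum>c\<in>child_edges E r v. h' c))"
proof (induction "card V - length (P w)" arbitrary: w h g rule: less_induct)
  case less
  have w: "w \<in> V" "w \<noteq> r" by fact+
  have hcons: "\<And>v. interior_vertex V E r v \<Longrightarrow> suffix (P w) (P v) \<Longrightarrow> h (pe v) = (\<Sum>c\<in>child_edges E r v. h c)"
    using less.prems(3) by blast
  have Lg: "L g = L (h (pe w))" by fact
  show ?case
  proof (cases "interior_vertex V E r w")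
    case False
    define h' where "h' = h(pe w := g)"
    have "h' (pe w) = g" unfolding h'_def by simp
    moreover have "\<forall>u. u \<in> V \<and> u \<noteq> r \<and> suffix (P w) (P u) \<longrightarrow> L (h' (pe u)) = L (h (pe u))"
    proof (intro allI impI)
      fix u assume u: "u \<in> V \<and> u \<noteq> r \<and> suffix (P w) (P u)"
      show "L (h' (pe u)) = L (h (pe u))"
      proof (cases "u = w")
        case True thus ?thesis using Lg unfolding h'_def by simp
      next
        case False
        hence "pe u \<noteq> pe w" using pe_inj u w by blast
        thus ?thesis unfolding h'_def by simp
      qed
    qed
    moreover have "\<forall>v. interior_vertex V E r v \<and> suffix (P w) (P v) \<longrightarrow> h' (pe v) = (\<Sum>c\<in>child_edges E r v. h' c)"
    proof (intro allI impI)
      fix v assume v: "interior_vertex V E r v \<and> suffix (P w) (P v)"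
      have vV: "v \<in> V" "v \<noteq> r" using v unfolding interior_vertex_def by auto
      have "v \<noteq> w" using v False by blast
      then obtain x where x: "x \<in> V" "P x = x # P w" using strict_below[OF vV w(1)] v by blast
      have "pe x \<in> child_edges E r w" using child_char2[OF w x] .
      hence "\<not> is_leaf E w" using degree_ge2 w by blast
      hence "interior_vertex V E r w" using w unfolding interior_vertex_def by blast
      thus "h' (pe v) = (\<Sum>c\<in>child_edges E r v. h' c)" using False by blast
    qed
    ultimately show ?thesis by blast
  next
    case True
    define C where "C = child_edges E r w"
    have finC: "finite C" unfolding C_def child_edges_def using finE by simp
    have Cne: "C \<noteq> {}"
    proof
      assume Ce: "C = {}"
      have "{e\<in>E. w \<in> e} = {pe w}"
      proof
        show "{e\<in>E. w \<in> e} \<subseteq> {pe w}" using Ce unfolding C_def child_edges_def by blast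
        show "{pe w} \<subseteq> {e\<in>E. w \<in> e}" using pe_E[OF w] pe[OF w] by simp
      qed
      hence "is_leaf E w" unfolding is_leaf_def degree_def by simp
      thus False using True unfolding interior_vertex_def by blast
    qed
    have hw: "h (pe w) = (\<Sum>c\<in>C. h c)" using hcons[OF True] unfolding C_def by simp
    obtain y where y: "\<forall>c\<in>C. L (y c) = L (h c)" "(\<Sum>c\<in>C. y c) = g"
      using friendly_star[OF fr finC Cne, of g h] Lg hw by auto
    define U where "U = {u. u \<in> V \<and> P u = u # P w}"
    have Uprop: "u \<noteq> r" "pe u \<in> C" "pe u = {u, w}" if "u \<in> U" for u
      using that not_r_of_Cons[of u w] w child_char2[OF w, of u] pe_child[of u w]
      unfolding U_def C_def by auto
    have "\<forall>u\<in>U. \<exists>h'. h' (pe u) = y (pe u) \<and> (\<forall>u'. u' \<in> V \<and> u' \<noteq> r \<and> suffix (P u) (P u') \<longrightarrow> L (h' (pe u')) = L (h (pe u')))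
      \<and> (\<forall>v. interior_vertex V E r v \<and> suffix (P u) (P v) \<longrightarrow> h' (pe v) = (\<Sum>c\<in>child_edges E r v. h' c))"
    proof
      fix u assume uU: "u \<in> U"
      have uV: "u \<in> V" and Pu: "P u = u # P w" using uU unfolding U_def by auto
      have ur: "u \<noteq> r" using Uprop uU by blast
      have "length (P u) \<le> card V" using P_len_le[OF uV ur] .
      hence lt: "card V - length (P u) < card V - length (P w)" using Pu by simp
      have hc: "\<forall>v. interior_vertex V E r v \<and> suffix (P u) (P v) \<longrightarrow> h (pe v) = (\<Sum>c\<in>child_edges E r v. h c)"
        using hcons Pu suffix_ConsD by metis
      have "L (y (pe u)) = L (h (pe u))" using y(1) Uprop(2)[OF uU] by blast
      thus "\<exists>h'. h' (pe u) = y (pe u) \<and> (\<forall>u'. u' \<in> V \<and> u' \<noteq> r \<and> suffix (P u) (P u') \<longrightarrow> L (h' (pe u')) = L (h (pe u')))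
      \<and> (\<forall>v. interior_vertex V E r v \<and> suffix (P u) (P v) \<longrightarrow> h' (pe v) = (\<Sum>c\<in>child_edges E r v. h' c))"
        using less.hyps[OF lt uV ur hc] by blast
    qed
    then obtain H where H: "\<And>u. u \<in> U \<Longrightarrow> H u (pe u) = y (pe u)"
      "\<And>u u'. u \<in> U \<Longrightarrow> u' \<in> V \<Longrightarrow> u' \<noteq> r \<Longrightarrow> suffix (P u) (P u') \<Longrightarrow> L (H u (pe u')) = L (h (pe u'))"
      "\<And>u v. u \<in> U \<Longrightarrow> interior_vertex V E r v \<Longrightarrow> suffix (P u) (P v) \<Longrightarrow> H u (pe v) = (\<Sum>c\<in>child_edges E r v. H u c)"
      by metis
    define D where "D u e' = (\<exists>v. v \<in> V \<and> v \<noteq> r \<and> suffix (P u) (P v) \<and> e' = pe v)" for u e'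
    define h' where "h' e' = (if e' = pe w then g else if \<exists>u\<in>U. D u e' then H (SOME u. u \<in> U \<and> D u e') e' else h e')" for e'
    have key: "h' e' = H u e'" if uU: "u \<in> U" and Du: "D u e'" for u e'
    proof -
      obtain v where v: "v \<in> V" "v \<noteq> r" "suffix (P u) (P v)" "e' = pe v" using Du unfolding D_def by blast
      have Pu: "P u = u # P w" using uU unfolding U_def by simp
      have "e' \<noteq> pe w"
      proof
        assume "e' = pe w"
        hence "v = w" using pe_inj v w by metis
        hence "suffix (u # P w) (P w)" using v Pu by simp
        thus False using suffix_length_le by fastforce
      qed
      moreover have "(SOME u. u \<in> U \<and> D u e') = u"
      proof (rule some_equality)
        show "u \<in> U \<and> D u e'" using uU Du by blast
      next
        fix u' assume u': "u' \<in> U \<and> D u' e'"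
        then obtain v' where v': "v' \<in> V" "v' \<noteq> r" "suffix (P u') (P v')" "e' = pe v'" unfolding D_def by blast
        have "v' = v" using pe_inj v v' by metis
        have Pu': "P u' = u' # P w" using u' unfolding U_def by simp
        have "P u' = P u" using suffix_eq_len[of "P u'" "P v" "P u"] v' \<open>v' = v\<close> v Pu Pu' by simp
        thus "u' = u" using Pu Pu' by simp
      qed
      ultimately show ?thesis unfolding h'_def using uU Du by auto
    qed
    have "h' (pe w) = g" unfolding h'_def by simp
    moreover have "\<forall>u. u \<in> V \<and> u \<noteq> r \<and> suffix (P w) (P u) \<longrightarrow> L (h' (pe u)) = L (h (pe u))"
    proof (intro allI impI)
      fix u assume u: "u \<in> V \<and> u \<noteq> r \<and> suffix (P w) (P u)"
      show "L (h' (pe u)) = L (h (pe u))"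
      proof (cases "u = w")
        case True thus ?thesis using Lg unfolding h'_def by simp
      next
        case False
        then obtain x where x: "x \<in> V" "P x = x # P w" "suffix (P x) (P u)"
          using strict_below[OF _ _ w(1)] u by blast
        have xU: "x \<in> U" using x unfolding U_def by simp
        have "D x (pe u)" unfolding D_def using u x by blast
        hence "h' (pe u) = H x (pe u)" using key xU by blast
        thus ?thesis using H(2)[OF xU] u x by simp
      qed
    qed
    moreover have "\<forall>v. interior_vertex V E r v \<and> suffix (P w) (P v) \<longrightarrow> h' (pe v) = (\<Sum>c\<in>child_edges E r v. h' c)"
    proof (intro allI impI)
      fix v assume v: "interior_vertex V E r v \<and> suffix (P w) (P v)"
      have vV: "v \<in> V" "v \<noteq> r" using v unfolding interior_vertex_def by auto
      show "h' (pe v) = (\<Sum>c\<in>child_edges E r v. h' c)"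
      proof (cases "v = w")
        case True
        have "(\<Sum>c\<in>child_edges E r v. h' c) = (\<Sum>c\<in>C. y c)"
          unfolding C_def True
        proof (rule sum.cong)
          fix c assume c: "c \<in> child_edges E r w"
          then obtain u where u: "u \<in> V" "u \<noteq> r" "P u = u # P w" "c = pe u" using child_pe[OF w] by blast
          have uU: "u \<in> U" using u unfolding U_def by simp
          have "D u c" unfolding D_def using u by blast
          hence "h' c = H u c" using key uU by blast
          thus "h' c = y c" using H(1)[OF uU] u by simp
        qed simp
        thus ?thesis using y(2) True unfolding h'_def by simp
      next
        case False
        then obtain x where x: "x \<in> V" "P x = x # P w" "suffix (P x) (P v)"
          using strict_below[OF vV w(1)] v by blast
        have xU: "x \<in> U" using x unfolding U_def by simp
        have "D x (pe v)" unfolding D_def using vV x by blast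
        hence e1: "h' (pe v) = H x (pe v)" using key xU by blast
        have e2: "(\<Sum>c\<in>child_edges E r v. h' c) = (\<Sum>c\<in>child_edges E r v. H x c)"
        proof (rule sum.cong)
          fix c assume c: "c \<in> child_edges E r v"
          then obtain u where u: "u \<in> V" "u \<noteq> r" "P u = u # P v" "c = pe u" using child_pe[OF vV] by blast
          have "suffix (P x) (P u)" using u(3) x(3) by (simp add: suffix_ConsI)
          hence "D x c" unfolding D_def using u by blast
          thus "h' c = H x c" using key xU by blast
        qed simp
        show ?thesis using e1 e2 H(3)[OF xU] v x(3) by simp
      qed
    qed
    ultimately show ?thesis by blast
  qed
qed

end

context rtree begin

lemma below_pe_iff:
  assumes b: "b \<in> V" "b \<noteq> r" and v: "v \<in> V" "v \<noteq> r"
  shows "below E r (pe b) (pe v) \<longleftrightarrow> suffix (P b) (P v)"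
proof
  assume "below E r (pe b) (pe v)"
  then obtain u where u: "u \<in> V" "u \<noteq> r" "pe v = pe u" "suffix (P b) (P u)" using below_iff[OF b] by blast
  have "u = v" using pe_inj u v by metis
  thus "suffix (P b) (P v)" using u by simp
next
  assume "suffix (P b) (P v)"
  thus "below E r (pe b) (pe v)" using below_iff[OF b] v by blast
qed

lemma glue_ok:
  fixes L :: "'g::ab_group_add \<Rightarrow> 'l" and h1 h2 :: "'v set \<Rightarrow> 'g"
  assumes fr: "friendly L" and ie: "interior_edge V E r e"
    and h1: "consistent_assignment V E r h1" and h2: "consistent_assignment V E r h2"
    and eqe: "L (h1 e) = L (h2 e)"
  shows "glue E r e (\<lambda>e'\<in>E. L (h1 e')) (\<lambda>e'\<in>E. L (h2 e')) \<in> consistent_labelings V E r L"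
proof -
  have eE: "e \<in> E" using ie unfolding interior_edge_def by blast
  obtain x y where xy: "x \<noteq> y" "x \<in> V" "y \<in> V" "e = {x, y}" using edgesV[OF eE] by blast
  have xi: "interior_vertex V E r x" using ie xy unfolding interior_edge_def by blast
  hence xr: "x \<noteq> r" unfolding interior_vertex_def by blast
  obtain b where b: "b \<in> V" "b \<noteq> r" "pe b = e"
  proof (cases "e = pe x")
    case True thus ?thesis using that xy(2) xr by metis
  next
    case False
    hence "e \<in> child_edges E r x" unfolding child_edges_def using eE xy by blast
    then obtain u where "u \<in> V" "u \<noteq> r" "P u = u # P x" "e = pe u" using child_pe[OF xy(2) xr] by blast
    thus ?thesis using that by metis
  qed
  have h1c: "\<And>v. interior_vertex V E r v \<Longrightarrow> h1 (pe v) = (\<Sum>c\<in>child_edges E r v. h1 c)"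
    using h1 unfolding consistent_assignment_def by blast
  have h2c: "\<And>v. interior_vertex V E r v \<Longrightarrow> h2 (pe v) = (\<Sum>c\<in>child_edges E r v. h2 c)"
    using h2 unfolding consistent_assignment_def by blast
  have "L (h2 e) = L (h1 (pe b))" using eqe b by simp
  then obtain h1' where h1': "h1' (pe b) = h2 e"
    "\<And>u. u \<in> V \<Longrightarrow> u \<noteq> r \<Longrightarrow> suffix (P b) (P u) \<Longrightarrow> L (h1' (pe u)) = L (h1 (pe u))"
    "\<And>v. interior_vertex V E r v \<Longrightarrow> suffix (P b) (P v) \<Longrightarrow> h1' (pe v) = (\<Sum>c\<in>child_edges E r v. h1' c)"
    using down[OF fr b(1,2), of h1 "h2 e"] h1c by blast
  define H where "H e' = (if below E r e e' then h1' e' else h2 e')" for e'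
  have Hc: "consistent_assignment V E r H"
    unfolding consistent_assignment_def
  proof (intro allI impI)
    fix v assume vi: "interior_vertex V E r v"
    have v: "v \<in> V" "v \<noteq> r" using vi unfolding interior_vertex_def by auto
    have ch: "\<exists>u. u \<in> V \<and> u \<noteq> r \<and> P u = u # P v \<and> c = pe u" if "c \<in> child_edges E r v" for c
      using child_pe[OF v that] .
    show "H (pe v) = (\<Sum>c\<in>child_edges E r v. H c)"
    proof (cases "suffix (P b) (P v)")
      case True
      have "below E r e (pe v)" using below_pe_iff[OF b(1,2) v] True b(3) by simp
      hence "H (pe v) = h1' (pe v)" unfolding H_def by simp
      moreover have "(\<Sum>c\<in>child_edges E r v. H c) = (\<Sum>c\<in>child_edges E r v. h1' c)"
      proof (rule sum.cong)
        fix c assume "c \<in> child_edges E r v"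
        then obtain u where u: "u \<in> V" "u \<noteq> r" "P u = u # P v" "c = pe u" using ch by blast
        have "suffix (P b) (P u)" using True u(3) by (simp add: suffix_ConsI)
        hence "below E r e c" using below_pe_iff[OF b(1,2) u(1,2)] b(3) u(4) by simp
        thus "H c = h1' c" unfolding H_def by simp
      qed simp
      ultimately show ?thesis using h1'(3)[OF vi True] by simp
    next
      case False
      have "\<not> below E r e (pe v)" using below_pe_iff[OF b(1,2) v] False b(3) by simp
      hence "H (pe v) = h2 (pe v)" unfolding H_def by simp
      moreover have "(\<Sum>c\<in>child_edges E r v. H c) = (\<Sum>c\<in>child_edges E r v. h2 c)"
      proof (rule sum.cong)
        fix c assume "c \<in> child_edges E r v"
        then obtain u where u: "u \<in> V" "u \<noteq> r" "P u = u # P v" "c = pe u" using ch by blast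
        show "H c = h2 c"
        proof (cases "below E r e c")
          case True
          hence "suffix (P b) (P u)" using below_pe_iff[OF b(1,2) u(1,2)] b(3) u(4) by simp
          hence "P b = P u" using False u(3) by (simp add: suffix_Cons)
          hence "b = u" using P0 b(1) u(1) by metis
          hence "c = e" using u(4) b(3) by simp
          thus ?thesis unfolding H_def using True h1'(1) b(3) by simp
        next
          case False thus ?thesis unfolding H_def by simp
        qed
      qed simp
      ultimately show ?thesis using h2c[OF vi] by simp
    qed
  qed
  have "glue E r e (\<lambda>e'\<in>E. L (h1 e')) (\<lambda>e'\<in>E. L (h2 e')) = (\<lambda>e'\<in>E. L (H e'))"
  proof (rule ext)
    fix e'
    show "glue E r e (\<lambda>e'\<in>E. L (h1 e')) (\<lambda>e'\<in>E. L (h2 e')) e' = (\<lambda>e'\<in>E. L (H e')) e'"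
    proof (cases "e' \<in> E")
      case False thus ?thesis unfolding glue_def by simp
    next
      case True
      show ?thesis
      proof (cases "below E r e e'")
        case bl: True
        then obtain u where u: "u \<in> V" "u \<noteq> r" "e' = pe u" "suffix (P b) (P u)"
          using below_iff[OF b(1,2)] b(3) by blast
        have "L (h1' e') = L (h1 e')" using h1'(2)[OF u(1,2,4)] u(3) by simp
        thus ?thesis unfolding glue_def H_def using True bl by simp
      next
        case False thus ?thesis unfolding glue_def H_def using True by simp
      qed
    qed
  qed
  thus ?thesis unfolding consistent_labelings_def using Hc by blast
qed

end

lemma param_swap:
  assumes "\<And>x. x \<in> E \<Longrightarrow> (a x = c x \<and> b x = d x) \<or> (a x = d x \<and> b x = c x)"
  shows "param_map E a * param_map E b = param_map E c * param_map E d"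
proof -
  have "param_map E a * param_map E b = (\<Prod>x\<in>E. Var (x, a x) * Var (x, b x))"
    unfolding param_map_def by (simp add: prod.distrib)
  also have "\<dots> = (\<Prod>x\<in>E. Var (x, c x) * Var (x, d x))"
  proof (rule prod.cong)
    fix x assume "x \<in> E"
    from assms[OF this] show "Var (x, a x) * Var (x, b x) = Var (x, c x) * Var (x, d x)"
    proof (elim disjE conjE)
      assume "a x = c x" "b x = d x" thus ?thesis by simp
    next
      assume "a x = d x" "b x = c x" thus ?thesis by (simp add: mult.commute)
    qed
  qed simp
  also have "\<dots> = param_map E c * param_map E d"
    unfolding param_map_def by (simp add: prod.distrib)
  finally show ?thesis .
qed

theorem lemma4p2:
  fixes V :: "'v set" and E :: "'v set set" and \<rho> :: 'v
    and L :: "'g::{ab_group_add, finite} \<Rightarrow> 'l::finite"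
    and e :: "'v set" and lam1 lam2 :: "'v set \<Rightarrow> 'l"
  assumes "friendly L"
    and "rooted_tree V E \<rho>"
    and "interior_edge V E \<rho> e"
    and "lam1 \<in> consistent_labelings V E \<rho> L"
    and "lam2 \<in> consistent_labelings V E \<rho> L"
    and "lam1 e = lam2 e"
  shows "glue E \<rho> e lam1 lam2 \<in> consistent_labelings V E \<rho> L
    \<and> glue E \<rho> e lam2 lam1 \<in> consistent_labelings V E \<rho> L
    \<and> Var lam1 * Var lam2 - Var (glue E \<rho> e lam1 lam2) * Var (glue E \<rho> e lam2 lam1)
        \<in> toric_ideal V E \<rho> L"
proof -
  interpret rtree V E \<rho> using assms(2) by (unfold_locales)
  obtain h1 where h1: "consistent_assignment V E \<rho> h1" "lam1 = (\<lambda>e'\<in>E. L (h1 e'))"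
    using assms(4) unfolding consistent_labelings_def by blast
  obtain h2 where h2: "consistent_assignment V E \<rho> h2" "lam2 = (\<lambda>e'\<in>E. L (h2 e'))"
    using assms(5) unfolding consistent_labelings_def by blast
  have eE: "e \<in> E" using assms(3) unfolding interior_edge_def by blast
  have eq: "L (h1 e) = L (h2 e)" using assms(6) h1(2) h2(2) eE by simp
  have g12: "glue E \<rho> e lam1 lam2 \<in> consistent_labelings V E \<rho> L"
    using glue_ok[OF assms(1) assms(3) h1(1) h2(1) eq] h1(2) h2(2) by simp
  have g21: "glue E \<rho> e lam2 lam1 \<in> consistent_labelings V E \<rho> L"
    using glue_ok[OF assms(1) assms(3) h2(1) h1(1) eq[symmetric]] h1(2) h2(2) by simp
  define p where "p = Var lam1 * Var lam2 - Var (glue E \<rho> e lam1 lam2) * Var (glue E \<rho> e lam2 lam1)"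
  have "vars p \<subseteq> {lam1, lam2} \<union> {glue E \<rho> e lam1 lam2, glue E \<rho> e lam2 lam1}"
    unfolding p_def using vars_diff vars_VV by (meson Un_mono order_trans)
  hence "vars p \<subseteq> consistent_labelings V E \<rho> L" using g12 g21 assms(4,5) by blast
  moreover have "subst_hom (param_map E) p = 0"
  proof -
    have "param_map E lam1 * param_map E lam2
        = param_map E (glue E \<rho> e lam1 lam2) * param_map E (glue E \<rho> e lam2 lam1)"
      by (rule param_swap) (auto simp: glue_def)
    thus ?thesis unfolding p_def subst_binom by simp
  qed
  ultimately have "p \<in> toric_ideal V E \<rho> L" unfolding toric_ideal_def by blast
  thus ?thesis using g12 g21 unfolding p_def by blast
qed

end
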